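(* For every integer $n\geqslant1$, \[ \sum_{k=0}^{n-1}\frac{(2k+1)^{2}}{(n-k)^{2}(n+k+1)^{2}} =\frac{\pi^{2}}{6}-\frac{2\gamma}{2n+1}-\frac{2}{2n+1}\psi(2n+1)-\psi_{1}(2n+1). \]
   Context: $\psi=\Gamma'/\Gamma$ is the digamma function, $\psi_1=\psi'$ the trigamma function, and $\gamma$ the Euler–Mascheroni constant. *)

theory Defs
  imports "HOL-Analysis.Analysis"
begin

end

theory Submission
  imports Defs
begin

lemma split_sum_aux: "(\<Sum>k<n+m. (f::nat\<Rightarrow>real) k) = (\<Sum>k<n. f k) + (\<Sum>k<m. f (n+k))"
  by (induction m) auto

lemma refl_sum_aux: "(\<Sum>k<n. (f::nat\<Rightarrow>real) (n - Suc k)) = (\<Sum>k<n. f k)"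
  by (rule sum.nat_diff_reindex)

lemma P11: "Polygamma 1 (1::real) = pi^2/6"
proof -
  have "(\<lambda>k. inverse ((1 + of_nat k)^Suc 1)) sums (pi^2/6 :: real)"
  proof -
    have "(\<lambda>k. inverse ((1 + of_nat k)^Suc 1)) = (\<lambda>n. 1 / real ((n + 1)^2))"
      by (rule ext) (simp add: inverse_eq_divide power2_eq_square algebra_simps)
    thus ?thesis by (subst \<open>_ = _\<close>) (rule inverse_squares_sums)
  qed
  thus ?thesis by (simp add: Polygamma_def sums_iff)
qed

lemma frac_aux:
  fixes a b :: real assumes "a > 0" "b > 0"
  shows "(b - a)^2 / (a^2 * b^2) = 1/a^2 + 1/b^2 - 2/(a+b) * (1/a + 1/b)"
proof -
  have 1: "1/a + 1/b = (a+b)/(a*b)" using assms by (simp add: field_simps)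
  have "a + b \<noteq> 0" using assms by simp
  hence 2: "2/(a+b) * ((a+b)/(a*b)) = 2/(a*b)"
    by (metis nonzero_mult_divide_mult_cancel_right2 times_divide_times_eq)
  have 3: "(b - a)^2 / (a^2 * b^2) = ((b-a)/(a*b))^2" by (simp add: power_divide power_mult_distrib)
  have 4: "(b-a)/(a*b) = 1/a - 1/b" using assms by (simp add: field_simps)
  have 5: "(1/a - 1/b)^2 = 1/a^2 + 1/b^2 - 2/(a*b)" by (simp add: power2_diff power_divide)
  show ?thesis unfolding 3 4 5 1 2 by simp
qed

lemma key_sum:
  fixes n :: nat
  shows "(\<Sum>k=0..n-1. (2 * real k + 1)^2 / ((real n - real k)^2 * (real n + real k + 1)^2))
     = (\<Sum>k<2*n. 1/(real k + 1)^2) - 2/(2*real n+1) * (\<Sum>k<2*n. 1/(real k + 1))"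
proof (cases "n = 0")
  case True thus ?thesis by simp
next
  case False
  define f where "f j = 1/(real j+1)^2" for j
  define g where "g j = 1/(real j+1)" for j
  have set: "{0..n-1} = {..<n}" using False by auto
  have tm: "(2 * real k + 1)^2 / ((real n - real k)^2 * (real n + real k + 1)^2)
      = f (n - Suc k) + f (n+k) - 2/(2*real n+1) * (g (n - Suc k) + g (n+k))" if "k < n" for k
  proof -
    have e: "real (n - Suc k) + 1 = real n - real k" using that by (simp add: of_nat_diff)
    have p1: "real n - real k > 0" using that by simp
    have p2: "real n + real k + 1 > 0" by simp
    have q: "(real n + real k + 1 - (real n - real k)) = 2*real k + 1" by simp
    have r: "(real n - real k + (real n + real k + 1)) = 2*real n+1" by simp
    have fa: "(2 * real k + 1)^2 / ((real n - real k)^2 * (real n + real k + 1)^2)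
      = 1/(real n - real k)^2 + 1/(real n + real k + 1)^2 - 2/(2*real n+1) * (1/(real n - real k) + 1/(real n + real k + 1))"
      using frac_aux[OF p1 p2] unfolding q r .
    have s: "real (n+k) + 1 = real n + real k + 1" by simp
    show ?thesis unfolding f_def g_def e s fa ..
  qed
  have "(\<Sum>k=0..n-1. (2 * real k + 1)^2 / ((real n - real k)^2 * (real n + real k + 1)^2))
     = (\<Sum>k<n. f (n - Suc k) + f (n+k) - 2/(2*real n+1) * (g (n - Suc k) + g (n+k)))"
    unfolding set by (rule sum.cong) (simp_all add: tm)
  also have "\<dots> = ((\<Sum>k<n. f (n - Suc k)) + (\<Sum>k<n. f (n+k)))
       - 2/(2*real n+1) * ((\<Sum>k<n. g (n - Suc k)) + (\<Sum>k<n. g (n+k)))"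
    by (simp only: sum_distrib_left[symmetric] sum.distrib sum_subtractf)
  also have "\<dots> = (\<Sum>k<2*n. f k) - 2/(2*real n+1) * (\<Sum>k<2*n. g k)"
    using split_sum_aux[where n=n and m=n and f=f] split_sum_aux[where n=n and m=n and f=g] refl_sum_aux[where n=n and f=f] refl_sum_aux[where n=n and f=g]
  proof -
    have nn: "2*n = n+n" by simp
    show ?thesis unfolding refl_sum_aux nn split_sum_aux ..
  qed
  finally show ?thesis by (simp add: f_def g_def)
qed

theorem mainTheorem7:
  fixes n :: nat
  assumes "n \<ge> 1"
  shows "(\<Sum>k=0..n-1. (2 * real k + 1)^2 / ((real n - real k)^2 * (real n + real k + 1)^2))
    = pi^2 / 6 - 2 * (euler_mascheroni :: real) / (2 * real n + 1)
      - 2 / (2 * real n + 1) * Digamma (2 * real n + 1)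
      - Polygamma 1 (2 * real n + 1)"
proof -
  have pg: "Polygamma 1 (1 + of_nat (2*n)) = Polygamma 1 (1::real) + (-1)^1 * fact 1 * (\<Sum>k<2*n. 1 / (1 + of_nat k) ^ Suc 1)"
    by (rule Polygamma_plus_of_nat) auto
  have pg2: "Polygamma 1 (2 * real n + 1) = pi^2/6 - (\<Sum>k<2*n. 1/(real k + 1)^2)"
  proof -
    have a: "(\<Sum>k<2*n. 1 / (1 + real k) ^ Suc 1) = (\<Sum>k<2*n. 1/(real k + 1)^2)"
      by (simp add: add.commute numeral_2_eq_2)
    have b: "1 + real (2*n) = 2 * real n + 1" by simp
    show ?thesis using pg unfolding a b P11 by simp
  qed
  have dg: "Digamma (of_nat (Suc (2*n))) = harm (2*n) - (euler_mascheroni::real)"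
    by (rule Digamma_of_nat)
  have h: "harm (2*n) = (\<Sum>k<2*n. 1/(real k + 1))"
    unfolding harm_def by (subst sum.atLeast1_atMost_eq[unfolded One_nat_def[symmetric]]) (simp add: inverse_eq_divide add.commute)
  have dg2: "Digamma (2 * real n + 1) = (\<Sum>k<2*n. 1/(real k + 1)) - euler_mascheroni"
  proof -
    have b: "real (Suc (2*n)) = 2 * real n + 1" by simp
    show ?thesis using dg unfolding b h .
  qed
  define A where "A = (\<Sum>k<2*n. 1/(real k + 1)^2)"
  define H where "H = (\<Sum>k<2*n. 1/(real k + 1))"
  define c where "c = 2 * real n + 1"
  have c: "c > 0" unfolding c_def by simp
  show ?thesis unfolding key_sum pg2 dg2 unfolding A_def[symmetric] H_def[symmetric] c_def[symmetric]
    using c by (simp add: field_simps)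
qed

end
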